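(* Let $n\geq2$, $m<0$, and let $\langle \sigma_{a_1}\cdots\sigma_{a_n}\rangle^{(m),+}$ and $\langle \sigma_{a_1}\cdots\sigma_{a_n}\rangle^{(-m),\mathtt{f}}$ be the full-plane scaling functions, and $\mathcal{C}=2^{1/6}e^{3\zeta'(-1)/2}$. Then $\mathcal{C}^n\langle \sigma_{a_1}\cdots\sigma_{a_n}\rangle^{(m),+}$ and $\mathcal{C}^n\langle \sigma_{a_1}\cdots\sigma_{a_n}\rangle^{(-m),\mathtt{f}}$ are rotationally invariant: for every $\phi\in\mathbb{R}$ and distinct $a_1,\ldots,a_n\in\mathbb{C}$, their values at $(e^{i\phi}a_1,\ldots,e^{i\phi}a_n)$ equal their values at $(a_1,\ldots,a_n)$.
   Context: Setting: $\Lambda=\Lambda_\delta$ is a $\delta$-isoradial lattice (every face inscribed in a circle of radius $\delta$; its dual $\Lambda^*$ is also $\delta$-isoradial), whose rhombus half-angles $\bar\theta_e\in(0,\pi/2)$ at primal vertices are uniformly bounded away from $0,\pi/2$. The Z-invariant Ising model with nome $q$ (elliptic modulus $k$, quarter period $K(k)$) assigns $\pm1$ spins to faces with weight $\prod_{e\in L(\sigma)}\tan(\hat\theta_e/2)$, $\sin\hat\theta_e=\operatorname{sn}(\tfrac{2K(k)}{\pi}\bar\theta_e|k)$, $L(\sigma)$ the set of edges separating unequal spins; $+$ denotes plus and $\mathtt{f}$ free boundary conditions, infinite-lattice expectations being infinite-volume limits. With nome $q=m\delta/2$ on $\Lambda$ (plus b.c.) and nome $-m\delta/2$ on $\Lambda^*$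 (free b.c.), the full-plane scaling functions are the functions for which, as $\delta\downarrow0$, $\delta^{-n/8}\mathbb{E}^{(m),+}_{\Lambda}[\sigma_{a_1}\cdots\sigma_{a_n}]\to \mathcal{C}^n\langle \sigma_{a_1}\cdots\sigma_{a_n}\rangle^{(m),+}$ and $\delta^{-n/8}\mathbb{E}^{(-m),\mathtt{f}}_{\Lambda^*}[\sigma_{a_1}\cdots\sigma_{a_n}]\to \mathcal{C}^n\langle \sigma_{a_1}\cdots\sigma_{a_n}\rangle^{(-m),\mathtt{f}}$, where $\sigma_a$ is the spin at a face near $a$. *)

theory Defs
  imports "HOL-Analysis.Analysis" "HOL-Complex_Analysis.Complex_Analysis"
begin

definition riemann_zeta :: "complex \<Rightarrow> complex" where
  "riemann_zeta = (THE f. f holomorphic_on (- {1}) \<and>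
       (\<forall>s. 1 < Re s \<longrightarrow> f s = (\<Sum>n. 1 / (of_nat (Suc n)) powr s)))"

definition ising_C :: real where
  "ising_C = 2 powr (1/6) * exp (3/2 * Re (deriv riemann_zeta (-1)))"

definition theta3 :: "real \<Rightarrow> real" where
  "theta3 q = 1 + 2 * (\<Sum>n. q ^ ((Suc n)^2))"

definition theta2_sum :: "real \<Rightarrow> real" where
  "theta2_sum q = (\<Sum>n. q ^ (n * (n + 1)))"

text \<open>Squared elliptic modulus k^2 as a function of the nome q: k^2 = theta2(q)^4/theta3(q)^4.\<close>
definition modsq_of_nome :: "real \<Rightarrow> real" where
  "modsq_of_nome q = 16 * q * (theta2_sum q) ^ 4 / (theta3 q) ^ 4"

text \<open>Incomplete elliptic integral of the first kind F(phi | M), M = k^2.\<close>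
definition ell_F :: "real \<Rightarrow> real \<Rightarrow> real" where
  "ell_F M \<phi> = integral {0..\<phi>} (\<lambda>t. 1 / sqrt (1 - M * (sin t)^2))"

definition ell_K :: "real \<Rightarrow> real" where
  "ell_K M = ell_F M (pi / 2)"

text \<open>Jacobi amplitude and sn (for nonnegative arguments, which is all we need).\<close>
definition jacobi_am :: "real \<Rightarrow> real \<Rightarrow> real" where
  "jacobi_am M u = (THE \<phi>. 0 \<le> \<phi> \<and> ell_F M \<phi> = u)"

definition jacobi_sn :: "real \<Rightarrow> real \<Rightarrow> real" where
  "jacobi_sn M u = sin (jacobi_am M u)"

definition zinv_weight :: "real \<Rightarrow> real \<Rightarrow> real" where
  "zinv_weight q \<theta> =
     (let M = modsq_of_nome q; K = ell_K M;
          th = arcsin (jacobi_sn M (2 * K / pi * \<theta>))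
      in tan (th / 2))"

text \<open>A tile (u, v, w, w') is the rhombus with primal vertices u, v (an edge of Lambda) and
  dual vertices w, w' (the dual edge, joining the centres of the two faces of Lambda
  separated by uv); its vertices in cyclic order are u, w, v, w'.\<close>
type_synonym tile = "complex \<times> complex \<times> complex \<times> complex"

fun tile_u :: "tile \<Rightarrow> complex" where "tile_u (u, v, w, w') = u"
fun tile_v :: "tile \<Rightarrow> complex" where "tile_v (u, v, w, w') = v"
fun tile_w :: "tile \<Rightarrow> complex" where "tile_w (u, v, w, w') = w"
fun tile_w' :: "tile \<Rightarrow> complex" where "tile_w' (u, v, w, w') = w'"

fun tile_verts :: "tile \<Rightarrow> complex set" where
  "tile_verts (u, v, w, w') = {u, v, w, w'}"

definition tile_hull :: "tile \<Rightarrow> complex set" where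
  "tile_hull t = convex hull (tile_verts t)"

fun rhombus_tile :: "real \<Rightarrow> tile \<Rightarrow> bool" where
  "rhombus_tile \<delta> (u, v, w, w') \<longleftrightarrow>
     cmod (u - w) = \<delta> \<and> cmod (w - v) = \<delta> \<and> cmod (v - w') = \<delta> \<and> cmod (w' - u) = \<delta> \<and>
     u \<noteq> v \<and> w \<noteq> w'"

text \<open>Half-angle bar theta_e of the rhombus at its primal vertex u.\<close>
definition half_angle :: "tile \<Rightarrow> real" where
  "half_angle t = arccos (cmod (tile_v t - tile_u t) / (2 * cmod (tile_w t - tile_u t)))"

definition primal_vertices :: "tile set \<Rightarrow> complex set" where
  "primal_vertices T = tile_u ` T \<union> tile_v ` T"

definition dual_vertices :: "tile set \<Rightarrow> complex set" where
  "dual_vertices T = tile_w ` T \<union> tile_w' ` T"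

text \<open>T is the rhombic embedding of a delta-isoradial lattice (and of its dual):
  an edge-to-edge, locally finite tiling of the plane by rhombi of side delta.\<close>
definition isoradial :: "real \<Rightarrow> tile set \<Rightarrow> bool" where
  "isoradial \<delta> T \<longleftrightarrow>
     0 < \<delta> \<and>
     (\<forall>t\<in>T. rhombus_tile \<delta> t) \<and>
     (\<forall>t1\<in>T. \<forall>t2\<in>T. t1 \<noteq> t2 \<longrightarrow>
         interior (tile_hull t1) \<inter> interior (tile_hull t2) = {}) \<and>
     (\<forall>t1\<in>T. \<forall>t2\<in>T. t1 \<noteq> t2 \<longrightarrow>
         tile_hull t1 \<inter> tile_hull t2 = convex hull (tile_verts t1 \<inter> tile_verts t2)) \<and>
     (\<Union>t\<in>T. tile_hull t) = UNIV \<and>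
     (\<forall>R. finite {t\<in>T. tile_hull t \<inter> cball 0 R \<noteq> {}}) \<and>
     primal_vertices T \<inter> dual_vertices T = {}"

definition angles_bounded :: "real \<Rightarrow> tile set \<Rightarrow> bool" where
  "angles_bounded \<eta> T \<longleftrightarrow> (\<forall>t\<in>T. \<eta> \<le> half_angle t \<and> half_angle t \<le> pi / 2 - \<eta>)"

definition configs :: "complex set \<Rightarrow> (complex \<Rightarrow> real) set" where
  "configs S = {\<sigma>. (\<forall>x\<in>S. \<sigma> x = 1 \<or> \<sigma> x = -1) \<and> (\<forall>x. x \<notin> S \<longrightarrow> \<sigma> x = 1)}"

text \<open>Lambda with plus boundary conditions: spins on faces of Lambda (dual vertices), +1 outside
  the window Dual(T) intersected with cball 0 R.\<close>
definition weight_plus :: "real \<Rightarrow> tile set \<Rightarrow> (complex \<Rightarrow> real) \<Rightarrow> real" where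
  "weight_plus q T \<sigma> = (\<Prod>t\<in>{t\<in>T. \<sigma> (tile_w t) \<noteq> \<sigma> (tile_w' t)}. zinv_weight q (half_angle t))"

definition corr_plus_fin :: "real \<Rightarrow> tile set \<Rightarrow> real \<Rightarrow> complex list \<Rightarrow> real" where
  "corr_plus_fin q T R fs =
     (let C = configs (dual_vertices T \<inter> cball 0 R)
      in (\<Sum>\<sigma>\<in>C. weight_plus q T \<sigma> * prod_list (map \<sigma> fs)) / (\<Sum>\<sigma>\<in>C. weight_plus q T \<sigma>))"

definition E_plus :: "real \<Rightarrow> tile set \<Rightarrow> complex list \<Rightarrow> real" where
  "E_plus q T fs = Lim at_top (\<lambda>R. corr_plus_fin q T R fs)"

text \<open>Lambda* with free boundary conditions: spins on faces of Lambda* (primal vertices of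
  Lambda); only edges with both endpoints in the window interact. The half-angle of a rhombus
  at its primal vertex for Lambda* (i.e. at w) is pi/2 - bar theta_e.\<close>
definition weight_free :: "real \<Rightarrow> tile set \<Rightarrow> real \<Rightarrow> (complex \<Rightarrow> real) \<Rightarrow> real" where
  "weight_free q T R \<sigma> =
     (\<Prod>t\<in>{t\<in>T. tile_u t \<in> cball 0 R \<and> tile_v t \<in> cball 0 R \<and> \<sigma> (tile_u t) \<noteq> \<sigma> (tile_v t)}.
        zinv_weight q (pi / 2 - half_angle t))"

definition corr_free_fin :: "real \<Rightarrow> tile set \<Rightarrow> real \<Rightarrow> complex list \<Rightarrow> real" where
  "corr_free_fin q T R fs =
     (let C = configs (primal_vertices T \<inter> cball 0 R)
      in (\<Sum>\<sigma>\<in>C. weight_free q T R \<sigma> * prod_list (map \<sigma> fs)) / (\<Sum>\<sigma>\<in>C. weight_free q T R \<sigma>))"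

definition E_free :: "real \<Rightarrow> tile set \<Rightarrow> complex list \<Rightarrow> real" where
  "E_free q T fs = Lim at_top (\<lambda>R. corr_free_fin q T R fs)"

text \<open>F is the full-plane scaling function for Lambda with nome m delta/2 and plus b.c.: for
  distinct points a_1..a_n, every family of delta-isoradial lattices with uniformly bounded
  half-angles and every choice of faces of Lambda_delta within distance delta of the a_j
  (e.g. the faces containing them), delta^{-n/8} E[...] tends to C^n F(a).\<close>
definition plus_scaling_fn :: "real \<Rightarrow> nat \<Rightarrow> (complex list \<Rightarrow> real) \<Rightarrow> bool" where
  "plus_scaling_fn m n F \<longleftrightarrow>
     (\<forall>a. length a = n \<and> distinct a \<longrightarrow>
       (\<forall>\<eta> L f. 0 < \<eta> \<and> (\<forall>\<delta>>0. isoradial \<delta> (L \<delta>) \<and> angles_bounded \<eta> (L \<delta>)) \<and>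
          (\<forall>\<delta>>0. length (f \<delta>) = n \<and>
             (\<forall>j<n. f \<delta> ! j \<in> dual_vertices (L \<delta>) \<and> cmod (f \<delta> ! j - a ! j) \<le> \<delta>)) \<longrightarrow>
          ((\<lambda>\<delta>. \<delta> powr (- (real n / 8)) * E_plus (m * \<delta> / 2) (L \<delta>) (f \<delta>))
             \<longlongrightarrow> ising_C ^ n * F a) (at_right 0)))"

definition free_scaling_fn :: "real \<Rightarrow> nat \<Rightarrow> (complex list \<Rightarrow> real) \<Rightarrow> bool" where
  "free_scaling_fn m n G \<longleftrightarrow>
     (\<forall>a. length a = n \<and> distinct a \<longrightarrow>
       (\<forall>\<eta> L f. 0 < \<eta> \<and> (\<forall>\<delta>>0. isoradial \<delta> (L \<delta>) \<and> angles_bounded \<eta> (L \<delta>)) \<and>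
          (\<forall>\<delta>>0. length (f \<delta>) = n \<and>
             (\<forall>j<n. f \<delta> ! j \<in> primal_vertices (L \<delta>) \<and> cmod (f \<delta> ! j - a ! j) \<le> \<delta>)) \<longrightarrow>
          ((\<lambda>\<delta>. \<delta> powr (- (real n / 8)) * E_free (- m * \<delta> / 2) (L \<delta>) (f \<delta>))
             \<longlongrightarrow> ising_C ^ n * G a) (at_right 0)))"

end

theory Submission
  imports Defs
begin

fun rotT :: "complex \<Rightarrow> tile \<Rightarrow> tile" where
  "rotT c (u,v,w,w') = (c * u, c * v, c * w, c * w')"

lemma rotT_simps[simp]:
  "tile_u (rotT c t) = c * tile_u t" "tile_v (rotT c t) = c * tile_v t"
  "tile_w (rotT c t) = c * tile_w t" "tile_w' (rotT c t) = c * tile_w' t"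
  "tile_verts (rotT c t) = (\<lambda>z. c*z) ` tile_verts t"
  by (cases t; auto)+

lemma inj_rotT: "c \<noteq> 0 \<Longrightarrow> inj (rotT c)"
  unfolding inj_def by auto

lemma linear_cmult: "linear (\<lambda>z::complex. c * z)"
  by (simp add: bounded_linear.linear bounded_linear_mult_right)

lemma inj_cmult: "c \<noteq> (0::complex) \<Longrightarrow> inj (\<lambda>z. c * z)"
  by (simp add: inj_def)

lemma tile_hull_rotT: "tile_hull (rotT c t) = (\<lambda>z. c*z) ` tile_hull t"
  unfolding tile_hull_def by (simp add: convex_hull_linear_image[OF linear_cmult])

lemma half_angle_rotT: "cmod c = 1 \<Longrightarrow> half_angle (rotT c t) = half_angle t"
  unfolding half_angle_def
  by (simp add: right_diff_distrib[symmetric] norm_mult)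

lemma rhombus_rotT: "cmod c = 1 \<Longrightarrow> rhombus_tile \<delta> (rotT c t) = rhombus_tile \<delta> t"
  apply (cases t) apply (simp add: right_diff_distrib[symmetric] norm_mult)
  by (metis mult_cancel_left norm_eq_zero one_neq_zero)

lemma cball_rot: "cmod c = 1 \<Longrightarrow> (\<lambda>z. c*z) ` cball 0 R = cball 0 R"
proof -
  assume c: "cmod c = 1"
  hence c0: "c \<noteq> 0" by auto
  show ?thesis
  proof
    show "(\<lambda>z. c*z) ` cball 0 R \<subseteq> cball 0 R" using c by (auto simp: norm_mult)
    show "cball 0 R \<subseteq> (\<lambda>z. c*z) ` cball 0 R"
    proof
      fix z assume "z \<in> cball (0::complex) R"
      hence "z / c \<in> cball 0 R" using c by (simp add: norm_divide)
      moreover have "z = c * (z / c)" using c0 by simp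
      ultimately show "z \<in> (\<lambda>z. c*z) ` cball 0 R" by blast
    qed
  qed
qed

lemma isoradial_rotT:
  assumes c: "cmod c = 1" and iso: "isoradial \<delta> T"
  shows "isoradial \<delta> (rotT c ` T)"
proof -
  have c0: "c \<noteq> 0" using c by auto
  let ?r = "\<lambda>z::complex. c*z"
  have intr: "interior (tile_hull (rotT c t)) = ?r ` interior (tile_hull t)" for t
    by (simp add: tile_hull_rotT interior_injective_linear_image[OF linear_cmult inj_cmult[OF c0]])
  have injr: "inj ?r" using inj_cmult[OF c0] .
  have surjr: "surj ?r"
    by (rule surjI[where f="\<lambda>z. z / c"]) (simp add: c0)
  have 1: "\<forall>t\<in>rotT c ` T. rhombus_tile \<delta> t" using iso c by (auto simp: isoradial_def rhombus_rotT)
  have 2: "\<forall>t1\<in>rotT c ` T. \<forall>t2\<in>rotT c ` T. t1 \<noteq> t2 \<longrightarrow>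
         interior (tile_hull t1) \<inter> interior (tile_hull t2) = {}"
  proof (intro ballI impI)
    fix t1 t2 assume "t1 \<in> rotT c ` T" "t2 \<in> rotT c ` T" "t1 \<noteq> t2"
    then obtain s1 s2 where "s1 \<in> T" "s2 \<in> T" "t1 = rotT c s1" "t2 = rotT c s2" "s1 \<noteq> s2" by auto
    thus "interior (tile_hull t1) \<inter> interior (tile_hull t2) = {}"
      using iso by (simp add: intr isoradial_def image_Int[OF injr, symmetric])
  qed
  have 3: "\<forall>t1\<in>rotT c ` T. \<forall>t2\<in>rotT c ` T. t1 \<noteq> t2 \<longrightarrow>
         tile_hull t1 \<inter> tile_hull t2 = convex hull (tile_verts t1 \<inter> tile_verts t2)"
  proof (intro ballI impI)
    fix t1 t2 assume "t1 \<in> rotT c ` T" "t2 \<in> rotT c ` T" "t1 \<noteq> t2"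
    then obtain s1 s2 where "s1 \<in> T" "s2 \<in> T" "t1 = rotT c s1" "t2 = rotT c s2" "s1 \<noteq> s2" by auto
    thus "tile_hull t1 \<inter> tile_hull t2 = convex hull (tile_verts t1 \<inter> tile_verts t2)"
      using iso by (simp add: tile_hull_rotT isoradial_def image_Int[OF injr, symmetric]
             convex_hull_linear_image[OF linear_cmult, symmetric])
  qed
  have 4: "(\<Union>t\<in>rotT c ` T. tile_hull t) = UNIV"
  proof -
    have "(\<Union>t\<in>rotT c ` T. tile_hull t) = ?r ` (\<Union>t\<in>T. tile_hull t)"
      by (auto simp: tile_hull_rotT)
    thus ?thesis using iso surjr by (simp add: isoradial_def)
  qed
  have 5: "finite {t\<in>rotT c ` T. tile_hull t \<inter> cball 0 R \<noteq> {}}" for R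
  proof -
    have "{t\<in>rotT c ` T. tile_hull t \<inter> cball 0 R \<noteq> {}} = rotT c ` {t\<in>T. tile_hull t \<inter> cball 0 R \<noteq> {}}"
    proof -
      have "tile_hull (rotT c t) \<inter> cball 0 R = ?r ` (tile_hull t \<inter> cball 0 R)" for t
        by (simp add: tile_hull_rotT image_Int[OF injr] cball_rot[OF c])
      hence e: "(tile_hull (rotT c t) \<inter> cball 0 R \<noteq> {}) = (tile_hull t \<inter> cball 0 R \<noteq> {})" for t
        by simp
      have g: "{x \<in> f ` A. P x} = f ` {x\<in>A. P (f x)}" for f :: "tile \<Rightarrow> tile" and A P by auto
      show ?thesis by (simp only: g e)
    qed
    thus ?thesis using iso by (simp add: isoradial_def)
  qed
  have 6: "primal_vertices (rotT c ` T) \<inter> dual_vertices (rotT c ` T) = {}"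
  proof -
    have "primal_vertices (rotT c ` T) = ?r ` primal_vertices T"
      by (auto simp: primal_vertices_def image_image image_Un)
    moreover have "dual_vertices (rotT c ` T) = ?r ` dual_vertices T"
      by (auto simp: dual_vertices_def image_image image_Un)
    ultimately show ?thesis using iso by (simp add: isoradial_def image_Int[OF injr, symmetric])
  qed
  show ?thesis using 1 2 3 4 5 6 iso unfolding isoradial_def by blast
qed


lemma Collect_image_eq: "{x \<in> f ` A. P x} = f ` {x\<in>A. P (f x)}" by auto

lemma configs_image:
  assumes i1: "\<And>z. r' (r z) = z" and i2: "\<And>z. r (r' z) = z"
  shows "configs (r ` S) = (\<lambda>\<sigma>. \<sigma> \<circ> r') ` configs S"
proof
  show "configs (r ` S) \<subseteq> (\<lambda>\<sigma>. \<sigma> \<circ> r') ` configs S"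
  proof
    fix \<sigma> assume s: "\<sigma> \<in> configs (r ` S)"
    have "\<sigma> \<circ> r \<in> configs S"
      unfolding configs_def
    proof (intro CollectI conjI allI ballI impI)
      fix x assume "x \<in> S" thus "(\<sigma> \<circ> r) x = 1 \<or> (\<sigma> \<circ> r) x = -1"
        using s unfolding configs_def by auto
    next
      fix x assume "x \<notin> S"
      hence "r x \<notin> r ` S" using i1 by (metis imageE)
      thus "(\<sigma> \<circ> r) x = 1" using s unfolding configs_def by auto
    qed
    moreover have "\<sigma> = (\<sigma> \<circ> r) \<circ> r'" using i2 by (simp add: o_def)
    ultimately show "\<sigma> \<in> (\<lambda>\<sigma>. \<sigma> \<circ> r') ` configs S" by blast
  qed
  show "(\<lambda>\<sigma>. \<sigma> \<circ> r') ` configs S \<subseteq> configs (r ` S)"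
  proof
    fix \<tau> assume "\<tau> \<in> (\<lambda>\<sigma>. \<sigma> \<circ> r') ` configs S"
    then obtain \<sigma> where s: "\<sigma> \<in> configs S" and t: "\<tau> = \<sigma> \<circ> r'" by blast
    show "\<tau> \<in> configs (r ` S)"
      unfolding configs_def
    proof (intro CollectI conjI allI ballI impI)
      fix y assume "y \<in> r ` S"
      then obtain x where "x \<in> S" "y = r x" by blast
      thus "\<tau> y = 1 \<or> \<tau> y = -1" using s i1 t unfolding configs_def by auto
    next
      fix y assume y: "y \<notin> r ` S"
      have "r' y \<notin> S" proof
        assume "r' y \<in> S" hence "r (r' y) \<in> r ` S" by blast
        thus False using y i2 by simp
      qed
      thus "\<tau> y = 1" using s t unfolding configs_def by auto
    qed
  qed
qed

lemma inj_comp_right: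
  assumes i1: "\<And>z. r' (r z) = z"
  shows "inj_on (\<lambda>\<sigma>. \<sigma> \<circ> r') A"
proof (rule inj_onI)
  fix x y assume "x \<circ> r' = y \<circ> r'"
  hence "x (r' (r z)) = y (r' (r z))" for z by (metis comp_apply)
  hence "x z = y z" for z using i1 by simp
  thus "x = y" by (rule ext)
qed

lemma sum_configs_image:
  assumes i1: "\<And>z. r' (r z) = z" and i2: "\<And>z. r (r' z) = z"
  shows "(\<Sum>\<sigma>\<in>configs (r ` S). h \<sigma>) = (\<Sum>\<sigma>\<in>configs S. h (\<sigma> \<circ> r'))"
  unfolding configs_image[OF i1 i2] using sum.reindex[OF inj_comp_right[where r=r and r'=r', OF i1], of h] by (simp only: comp_def)

lemma corr_plus_rot:
  assumes c: "cmod c = 1"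
  shows "corr_plus_fin q (rotT c ` T) R (map (\<lambda>z. c * z) fs) = corr_plus_fin q T R fs"
proof -
  have c0: "c \<noteq> 0" using c by auto
  let ?r = "\<lambda>z::complex. c * z" and ?r' = "\<lambda>z::complex. z / c"
  have i1: "\<And>z. ?r' (?r z) = z" and i2: "\<And>z. ?r (?r' z) = z" using c0 by auto
  have injr: "inj ?r" using inj_cmult[OF c0] .
  have D: "dual_vertices (rotT c ` T) \<inter> cball 0 R = ?r ` (dual_vertices T \<inter> cball 0 R)"
  proof -
    have "dual_vertices (rotT c ` T) = ?r ` dual_vertices T"
      by (auto simp: dual_vertices_def image_image image_Un)
    thus ?thesis by (simp add: image_Int[OF injr] cball_rot[OF c])
  qed
  have W: "weight_plus q (rotT c ` T) (\<sigma> \<circ> ?r') = weight_plus q T \<sigma>" for \<sigma>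
  proof -
    have "{t\<in>rotT c ` T. (\<sigma> \<circ> ?r') (tile_w t) \<noteq> (\<sigma> \<circ> ?r') (tile_w' t)}
        = rotT c ` {t\<in>T. \<sigma> (tile_w t) \<noteq> \<sigma> (tile_w' t)}"
      by (simp only: Collect_image_eq) (simp add: c0)
    thus ?thesis unfolding weight_plus_def
      by (simp add: prod.reindex[OF inj_on_subset[OF inj_rotT[OF c0]]] half_angle_rotT[OF c])
  qed
  have P: "prod_list (map (\<sigma> \<circ> ?r') (map ?r fs)) = prod_list (map \<sigma> fs)" for \<sigma> :: "complex \<Rightarrow> real"
    using c0 by (simp add: o_def)
  show ?thesis unfolding corr_plus_fin_def Let_def D
    by (simp only: sum_configs_image[OF i1 i2] W P)
qed

lemma corr_free_rot:
  assumes c: "cmod c = 1"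
  shows "corr_free_fin q (rotT c ` T) R (map (\<lambda>z. c * z) fs) = corr_free_fin q T R fs"
proof -
  have c0: "c \<noteq> 0" using c by auto
  let ?r = "\<lambda>z::complex. c * z" and ?r' = "\<lambda>z::complex. z / c"
  have i1: "\<And>z. ?r' (?r z) = z" and i2: "\<And>z. ?r (?r' z) = z" using c0 by auto
  have injr: "inj ?r" using inj_cmult[OF c0] .
  have D: "primal_vertices (rotT c ` T) \<inter> cball 0 R = ?r ` (primal_vertices T \<inter> cball 0 R)"
  proof -
    have "primal_vertices (rotT c ` T) = ?r ` primal_vertices T"
      by (auto simp: primal_vertices_def image_image image_Un)
    thus ?thesis by (simp add: image_Int[OF injr] cball_rot[OF c])
  qed
  have W: "weight_free q (rotT c ` T) R (\<sigma> \<circ> ?r') = weight_free q T R \<sigma>" for \<sigma>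
  proof -
    have "{t\<in>rotT c ` T. tile_u t \<in> cball 0 R \<and> tile_v t \<in> cball 0 R \<and>
            (\<sigma> \<circ> ?r') (tile_u t) \<noteq> (\<sigma> \<circ> ?r') (tile_v t)}
        = rotT c ` {t\<in>T. tile_u t \<in> cball 0 R \<and> tile_v t \<in> cball 0 R \<and> \<sigma> (tile_u t) \<noteq> \<sigma> (tile_v t)}"
      by (simp only: Collect_image_eq) (simp add: c0 norm_mult c)
    thus ?thesis unfolding weight_free_def
      by (simp add: prod.reindex[OF inj_on_subset[OF inj_rotT[OF c0]]] half_angle_rotT[OF c])
  qed
  have P: "prod_list (map (\<sigma> \<circ> ?r') (map ?r fs)) = prod_list (map \<sigma> fs)" for \<sigma> :: "complex \<Rightarrow> real"
    using c0 by (simp add: o_def)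
  show ?thesis unfolding corr_free_fin_def Let_def D
    by (simp only: sum_configs_image[OF i1 i2] W P)
qed

lemma E_plus_rot: "cmod c = 1 \<Longrightarrow> E_plus q (rotT c ` T) (map (\<lambda>z. c * z) fs) = E_plus q T fs"
  unfolding E_plus_def by (simp add: corr_plus_rot)

lemma E_free_rot: "cmod c = 1 \<Longrightarrow> E_free q (rotT c ` T) (map (\<lambda>z. c * z) fs) = E_free q T fs"
  unfolding E_free_def by (simp add: corr_free_rot)


definition pt :: "real \<Rightarrow> int \<Rightarrow> int \<Rightarrow> complex" where
  "pt \<delta> x y = Complex (\<delta> * of_int x) (\<delta> * of_int y)"

definition sq :: "real \<Rightarrow> int \<Rightarrow> int \<Rightarrow> tile" where
  "sq \<delta> i j = (if even (i + j) then (pt \<delta> i j, pt \<delta> (i+1) (j+1), pt \<delta> (i+1) j, pt \<delta> i (j+1))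
               else (pt \<delta> (i+1) j, pt \<delta> i (j+1), pt \<delta> i j, pt \<delta> (i+1) (j+1)))"

definition SQ :: "real \<Rightarrow> tile set" where
  "SQ \<delta> = (\<lambda>(i,j). sq \<delta> i j) ` UNIV"

definition rect :: "real \<Rightarrow> real \<Rightarrow> real \<Rightarrow> real \<Rightarrow> complex set" where
  "rect x0 x1 y0 y1 = {z. x0 \<le> Re z \<and> Re z \<le> x1 \<and> y0 \<le> Im z \<and> Im z \<le> y1}"

lemma rect_cbox: "rect x0 x1 y0 y1 = cbox (Complex x0 y0) (Complex x1 y1)"
  by (auto simp: rect_def cbox_complex_eq)

lemma pt_inj: "\<delta> \<noteq> 0 \<Longrightarrow> pt \<delta> x y = pt \<delta> x' y' \<longleftrightarrow> x = x' \<and> y = y'"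
  by (simp add: pt_def)

lemma hull_corners:
  assumes "x0 \<le> x1" "y0 \<le> y1"
  shows "convex hull {Complex x0 y0, Complex x1 y0, Complex x0 y1, Complex x1 y1} = rect x0 x1 y0 y1"
proof
  show "convex hull {Complex x0 y0, Complex x1 y0, Complex x0 y1, Complex x1 y1} \<subseteq> rect x0 x1 y0 y1"
  proof (rule hull_minimal)
    show "convex (rect x0 x1 y0 y1)" unfolding rect_cbox by (rule convex_box)
  qed (use assms in \<open>auto simp: rect_def\<close>)
  show "rect x0 x1 y0 y1 \<subseteq> convex hull {Complex x0 y0, Complex x1 y0, Complex x0 y1, Complex x1 y1}"
  proof
    fix z assume z: "z \<in> rect x0 x1 y0 y1"
    let ?H = "convex hull {Complex x0 y0, Complex x1 y0, Complex x0 y1, Complex x1 y1}"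
    have p0: "Complex (Re z) y0 \<in> ?H"
    proof -
      have "Complex (Re z) y0 \<in> closed_segment (Complex x0 y0) (Complex x1 y0)"
        using z assms by (simp add: closed_segment_same_Im closed_segment_eq_real_ivl rect_def)
      moreover have "closed_segment (Complex x0 y0) (Complex x1 y0) \<subseteq> ?H"
        by (rule closed_segment_subset_convex_hull) (auto intro: hull_inc)
      ultimately show ?thesis by blast
    qed
    have p1: "Complex (Re z) y1 \<in> ?H"
    proof -
      have "Complex (Re z) y1 \<in> closed_segment (Complex x0 y1) (Complex x1 y1)"
        using z assms by (simp add: closed_segment_same_Im closed_segment_eq_real_ivl rect_def)
      moreover have "closed_segment (Complex x0 y1) (Complex x1 y1) \<subseteq> ?H"
        by (rule closed_segment_subset_convex_hull) (auto intro: hull_inc)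
      ultimately show ?thesis by blast
    qed
    have "z \<in> closed_segment (Complex (Re z) y0) (Complex (Re z) y1)"
      using z assms by (simp add: closed_segment_same_Re closed_segment_eq_real_ivl rect_def)
    moreover have "closed_segment (Complex (Re z) y0) (Complex (Re z) y1) \<subseteq> ?H"
      by (rule closed_segment_subset_convex_hull[OF p0 p1])
    ultimately show "z \<in> ?H" by blast
  qed
qed

lemma verts_sq: "tile_verts (sq \<delta> i j) = {pt \<delta> i j, pt \<delta> (i+1) j, pt \<delta> i (j+1), pt \<delta> (i+1) (j+1)}"
  by (auto simp: sq_def)

lemma verts_sq': "tile_verts (sq \<delta> i j) = (\<lambda>(x,y). pt \<delta> x y) ` ({i, i+1} \<times> {j, j+1})"
  unfolding verts_sq by auto

lemma hull_sq: "\<delta> > 0 \<Longrightarrow> tile_hull (sq \<delta> i j) = rect (\<delta> * i) (\<delta> * (i+1)) (\<delta> * j) (\<delta> * (j+1))"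
  unfolding tile_hull_def verts_sq pt_def
  by (subst hull_corners[symmetric]) (auto simp: insert_commute)


lemma cmod_pt: "cmod (pt \<delta> x y - pt \<delta> x' y') = sqrt ((\<delta> * (x - x'))\<^sup>2 + (\<delta> * (y - y'))\<^sup>2)"
  by (simp add: pt_def norm_complex_def right_diff_distrib)

lemma rhombus_sq: "\<delta> > 0 \<Longrightarrow> rhombus_tile \<delta> (sq \<delta> i j)"
  by (auto simp: sq_def cmod_pt pt_inj)

lemma half_angle_sq: "\<delta> > 0 \<Longrightarrow> half_angle (sq \<delta> i j) = pi / 4"
proof -
  assume d: "\<delta> > 0"
  have "cmod (tile_v (sq \<delta> i j) - tile_u (sq \<delta> i j)) = \<delta> * sqrt 2"
    using d by (auto simp: sq_def cmod_pt power_mult_distrib real_sqrt_mult)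
  moreover have "cmod (tile_w (sq \<delta> i j) - tile_u (sq \<delta> i j)) = \<delta>"
    using d by (auto simp: sq_def cmod_pt)
  ultimately have "half_angle (sq \<delta> i j) = arccos (sqrt 2 / 2)"
    using d by (simp add: half_angle_def)
  also have "\<dots> = pi / 4"
  proof -
    have "arccos (cos (pi/4)) = pi/4" by (rule arccos_cos) (use pi_gt_zero in auto)
    thus ?thesis by (simp add: cos_45)
  qed
  finally show ?thesis .
qed

lemma int_cell_unique:
  fixes i i' :: int and \<delta> x :: real
  assumes d: "\<delta> > 0" and "\<delta> * i < x" "x < \<delta> * of_int (i+1)" "\<delta> * i' < x" "x < \<delta> * of_int (i'+1)"
  shows "i = i'"
proof -
  have "\<delta> * i < \<delta> * (i'+1)" "\<delta> * i' < \<delta> * (i+1)" using assms by linarith+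
  hence "real_of_int i < i' + 1" "real_of_int i' < i + 1" using d by (simp_all add: mult_less_cancel_left_pos)
  thus ?thesis by linarith
qed

lemma interior_sq: "\<delta> > 0 \<Longrightarrow> interior (tile_hull (sq \<delta> i j)) =
   {z. \<delta> * i < Re z \<and> Re z < \<delta> * (i+1) \<and> \<delta> * j < Im z \<and> Im z < \<delta> * (j+1)}"
  by (simp add: hull_sq rect_cbox box_complex_eq)

lemma sq_interiors:
  assumes d: "\<delta> > 0" and ne: "sq \<delta> i j \<noteq> sq \<delta> i' j'"
  shows "interior (tile_hull (sq \<delta> i j)) \<inter> interior (tile_hull (sq \<delta> i' j')) = {}"
proof (rule ccontr)
  assume "interior (tile_hull (sq \<delta> i j)) \<inter> interior (tile_hull (sq \<delta> i' j')) \<noteq> {}"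
  then obtain z where z: "\<delta> * i < Re z" "Re z < \<delta> * (i+1)" "\<delta> * j < Im z" "Im z < \<delta> * (j+1)"
      "\<delta> * i' < Re z" "Re z < \<delta> * (i'+1)" "\<delta> * j' < Im z" "Im z < \<delta> * (j'+1)"
    using d by (auto simp: interior_sq)
  have "i = i'" using int_cell_unique[OF d z(1,2,5,6)] .
  moreover have "j = j'" using int_cell_unique[OF d z(3,4,7,8)] .
  ultimately show False using ne by simp
qed

lemma int_pair_cases:
  fixes i i' :: int
  shows "({i, i+1} \<inter> {i', i'+1} = {} \<and> (i + 1 < i' \<or> i' + 1 < i)) \<or>
         ({i, i+1} \<inter> {i', i'+1} = {max i i', min (i+1) (i'+1)} \<and> max i i' \<le> min (i+1) (i'+1))"
proof -
  consider "i' = i" | "i' = i + 1" | "i = i' + 1" | "i + 1 < i'" | "i' + 1 < i" by linarith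
  thus ?thesis by cases auto
qed

lemma rect_Int: "rect a b c d \<inter> rect a' b' c' d' = rect (max a a') (min b b') (max c c') (min d d')"
  by (auto simp: rect_def)

lemma rect_empty1: "b < a' \<Longrightarrow> rect a b c d \<inter> rect a' b' c' d' = {}"
  by (auto simp: rect_def)
lemma rect_empty2: "d < c' \<Longrightarrow> rect a b c d \<inter> rect a' b' c' d' = {}"
  by (auto simp: rect_def)

lemma mult_max: "\<delta> > 0 \<Longrightarrow> \<delta> * real_of_int (max i i') = max (\<delta> * i) (\<delta> * i')"
  by (simp add: max_def)
lemma mult_min: "\<delta> > 0 \<Longrightarrow> \<delta> * real_of_int (min i i') = min (\<delta> * i) (\<delta> * i')"
  by (simp add: min_def)

lemma sq_edge:
  assumes d: "\<delta> > 0"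
  shows "tile_hull (sq \<delta> i j) \<inter> tile_hull (sq \<delta> i' j') =
         convex hull (tile_verts (sq \<delta> i j) \<inter> tile_verts (sq \<delta> i' j'))"
proof -
  let ?p = "\<lambda>(x,y). pt \<delta> x y"
  have injp: "inj ?p" using d by (auto simp: inj_def pt_inj)
  have V: "tile_verts (sq \<delta> i j) \<inter> tile_verts (sq \<delta> i' j') =
      ?p ` (({i, i+1} \<inter> {i', i'+1}) \<times> ({j, j+1} \<inter> {j', j'+1}))"
    by (simp only: verts_sq' image_Int[OF injp, symmetric] Times_Int_Times)
  have H: "tile_hull (sq \<delta> i j) \<inter> tile_hull (sq \<delta> i' j') =
     rect (max (\<delta> * i) (\<delta> * i')) (min (\<delta> * (i+1)) (\<delta> * (i'+1)))
          (max (\<delta> * j) (\<delta> * j')) (min (\<delta> * (j+1)) (\<delta> * (j'+1)))"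
    using d by (simp add: hull_sq rect_Int)
  show ?thesis
  proof (cases "{i, i+1} \<inter> {i', i'+1} = {} \<or> {j, j+1} \<inter> {j', j'+1} = {}")
    case True
    hence "tile_verts (sq \<delta> i j) \<inter> tile_verts (sq \<delta> i' j') = {}" unfolding V by auto
    moreover have "tile_hull (sq \<delta> i j) \<inter> tile_hull (sq \<delta> i' j') = {}"
    proof -
      have "i + 1 < i' \<or> i' + 1 < i \<or> j + 1 < j' \<or> j' + 1 < j"
        using True int_pair_cases[of i i'] int_pair_cases[of j j'] by auto
      moreover have lt: "\<delta> * of_int (k + 1) < \<delta> * of_int k'" if "k + 1 < k'" for k k' :: int
        using d that by simp
      moreover have "tile_hull (sq \<delta> i j) = rect (\<delta> * i) (\<delta> * of_int (i+1)) (\<delta> * j) (\<delta> * of_int (j+1))"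
        "tile_hull (sq \<delta> i' j') = rect (\<delta> * i') (\<delta> * of_int (i'+1)) (\<delta> * j') (\<delta> * of_int (j'+1))"
        using d by (simp_all add: hull_sq)
      ultimately show ?thesis
        by (metis lt rect_empty1 rect_empty2 inf_commute)
    qed
    ultimately show ?thesis by simp
  next
    case False
    hence A: "{i, i+1} \<inter> {i', i'+1} = {max i i', min (i+1) (i'+1)}" "max i i' \<le> min (i+1) (i'+1)"
      and B: "{j, j+1} \<inter> {j', j'+1} = {max j j', min (j+1) (j'+1)}" "max j j' \<le> min (j+1) (j'+1)"
      using int_pair_cases[of i i'] int_pair_cases[of j j'] by auto
    let ?a = "\<delta> * max i i'" and ?b = "\<delta> * min (i+1) (i'+1)"
    let ?c = "\<delta> * max j j'" and ?e = "\<delta> * min (j+1) (j'+1)"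
    have "tile_verts (sq \<delta> i j) \<inter> tile_verts (sq \<delta> i' j') =
          {Complex ?a ?c, Complex ?b ?c, Complex ?a ?e, Complex ?b ?e}"
      unfolding V A(1) B(1) by (auto simp: pt_def)
    moreover have "?a \<le> ?b" "?c \<le> ?e" using A(2) B(2) d by simp_all
    ultimately have "convex hull (tile_verts (sq \<delta> i j) \<inter> tile_verts (sq \<delta> i' j')) = rect ?a ?b ?c ?e"
      by (simp add: hull_corners)
    also have "\<dots> = tile_hull (sq \<delta> i j) \<inter> tile_hull (sq \<delta> i' j')"
      unfolding H using d by (simp add: mult_max mult_min)
    finally show ?thesis by simp
  qed
qed


lemma floor_cell:
  fixes \<delta> x :: real assumes d: "\<delta> > 0"
  shows "\<delta> * of_int \<lfloor>x / \<delta>\<rfloor> \<le> x" "x \<le> \<delta> * of_int (\<lfloor>x / \<delta>\<rfloor> + 1)"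
proof -
  have "of_int \<lfloor>x / \<delta>\<rfloor> \<le> x / \<delta>" by simp
  hence "of_int \<lfloor>x / \<delta>\<rfloor> * \<delta> \<le> x" using d by (simp only: pos_le_divide_eq)
  thus "\<delta> * of_int \<lfloor>x / \<delta>\<rfloor> \<le> x" by (metis mult.commute)
  have "x / \<delta> \<le> of_int (\<lfloor>x / \<delta>\<rfloor> + 1)" by linarith
  hence "x \<le> of_int (\<lfloor>x / \<delta>\<rfloor> + 1) * \<delta>" using d by (simp only: pos_divide_le_eq)
  thus "x \<le> \<delta> * of_int (\<lfloor>x / \<delta>\<rfloor> + 1)" by (metis mult.commute)
qed

lemma cell_bound:
  fixes \<delta> x R :: real and i :: int
  assumes d: "\<delta> > 0" and "\<delta> * of_int i \<le> x" "x \<le> \<delta> * of_int (i+1)" "\<bar>x\<bar> \<le> R"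
  shows "i \<in> {-(\<lceil>R/\<delta>\<rceil>+1)..\<lceil>R/\<delta>\<rceil>+1}"
proof -
  have "of_int i \<le> x / \<delta>" using assms by (simp add: pos_le_divide_eq mult.commute)
  moreover have "x / \<delta> \<le> R / \<delta>" using assms by (simp add: divide_right_mono)
  moreover have "x / \<delta> \<le> of_int (i+1)" using assms by (simp add: pos_divide_le_eq mult.commute)
  moreover have "- R / \<delta> \<le> x / \<delta>"
  proof -
    have "-R \<le> x" using assms by linarith
    from divide_right_mono[OF this, of \<delta>] d show ?thesis by simp
  qed
  moreover have "R / \<delta> \<le> of_int \<lceil>R/\<delta>\<rceil>" by simp
  ultimately show ?thesis by auto linarith+
qed

lemma sq_u_even: "\<exists>x y. tile_u (sq \<delta> i j) = pt \<delta> x y \<and> even (x + y)"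
proof (cases "even (i+j)")
  case True thus ?thesis by (intro exI[of _ i] exI[of _ j]) (simp add: sq_def)
next
  case False thus ?thesis by (intro exI[of _ "i+1"] exI[of _ j]) (simp add: sq_def)
qed
lemma sq_v_even: "\<exists>x y. tile_v (sq \<delta> i j) = pt \<delta> x y \<and> even (x + y)"
proof (cases "even (i+j)")
  case True thus ?thesis by (intro exI[of _ "i+1"] exI[of _ "j+1"]) (simp add: sq_def)
next
  case False thus ?thesis by (intro exI[of _ i] exI[of _ "j+1"]) (simp add: sq_def)
qed
lemma sq_w_odd: "\<exists>x y. tile_w (sq \<delta> i j) = pt \<delta> x y \<and> odd (x + y)"
proof (cases "even (i+j)")
  case True thus ?thesis by (intro exI[of _ "i+1"] exI[of _ j]) (simp add: sq_def)
next
  case False thus ?thesis by (intro exI[of _ i] exI[of _ j]) (simp add: sq_def)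
qed
lemma sq_w'_odd: "\<exists>x y. tile_w' (sq \<delta> i j) = pt \<delta> x y \<and> odd (x + y)"
proof (cases "even (i+j)")
  case True thus ?thesis by (intro exI[of _ i] exI[of _ "j+1"]) (simp add: sq_def)
next
  case False thus ?thesis by (intro exI[of _ "i+1"] exI[of _ "j+1"]) (simp add: sq_def)
qed

lemma isoradial_SQ: "\<delta> > 0 \<Longrightarrow> isoradial \<delta> (SQ \<delta>)"
proof -
  assume d: "\<delta> > 0"
  have 1: "\<forall>t\<in>SQ \<delta>. rhombus_tile \<delta> t" using d by (auto simp: SQ_def rhombus_sq)
  have 2: "\<forall>t1\<in>SQ \<delta>. \<forall>t2\<in>SQ \<delta>. t1 \<noteq> t2 \<longrightarrow>
         interior (tile_hull t1) \<inter> interior (tile_hull t2) = {}"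
    using d by (auto simp: SQ_def sq_interiors)
  have 3: "\<forall>t1\<in>SQ \<delta>. \<forall>t2\<in>SQ \<delta>. t1 \<noteq> t2 \<longrightarrow>
         tile_hull t1 \<inter> tile_hull t2 = convex hull (tile_verts t1 \<inter> tile_verts t2)"
    using d by (auto simp: SQ_def sq_edge simp del: tile_verts.simps)
  have 4: "(\<Union>t\<in>SQ \<delta>. tile_hull t) = UNIV"
  proof -
    have "z \<in> tile_hull (sq \<delta> \<lfloor>Re z / \<delta>\<rfloor> \<lfloor>Im z / \<delta>\<rfloor>)" for z
      using d floor_cell[OF d, of "Re z"] floor_cell[OF d, of "Im z"]
      by (simp add: hull_sq rect_def)
    moreover have "sq \<delta> \<lfloor>Re z / \<delta>\<rfloor> \<lfloor>Im z / \<delta>\<rfloor> \<in> SQ \<delta>" for z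
      unfolding SQ_def by (rule image_eqI[of _ _ "(\<lfloor>Re z / \<delta>\<rfloor>, \<lfloor>Im z / \<delta>\<rfloor>)"]) auto
    ultimately show ?thesis by blast
  qed
  have 5: "finite {t\<in>SQ \<delta>. tile_hull t \<inter> cball 0 R \<noteq> {}}" for R
  proof -
    let ?I = "{-(\<lceil>R/\<delta>\<rceil>+1)..\<lceil>R/\<delta>\<rceil>+1}"
    have "{t\<in>SQ \<delta>. tile_hull t \<inter> cball 0 R \<noteq> {}} \<subseteq> (\<lambda>(i,j). sq \<delta> i j) ` (?I \<times> ?I)"
    proof
      fix t assume "t \<in> {t\<in>SQ \<delta>. tile_hull t \<inter> cball 0 R \<noteq> {}}"
      then obtain i j z where t: "t = sq \<delta> i j" and z: "z \<in> tile_hull (sq \<delta> i j)" "cmod z \<le> R"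
        unfolding SQ_def by (auto simp del: tile_verts.simps) (metis mem_cball_0)
      have zz: "\<delta> * of_int i \<le> Re z" "Re z \<le> \<delta> * of_int (i+1)" "\<delta> * of_int j \<le> Im z" "Im z \<le> \<delta> * of_int (j+1)"
        using z d by (simp_all add: hull_sq rect_def)
      have "\<bar>Re z\<bar> \<le> R" "\<bar>Im z\<bar> \<le> R" using z abs_Re_le_cmod abs_Im_le_cmod by (metis order_trans)+
      hence "i \<in> ?I" "j \<in> ?I" using cell_bound[OF d zz(1,2)] cell_bound[OF d zz(3,4)] by auto
      thus "t \<in> (\<lambda>(i,j). sq \<delta> i j) ` (?I \<times> ?I)" using t by auto
    qed
    thus ?thesis by (rule finite_subset) auto
  qed
  have 6: "primal_vertices (SQ \<delta>) \<inter> dual_vertices (SQ \<delta>) = {}"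
  proof -
    have "primal_vertices (SQ \<delta>) \<subseteq> {pt \<delta> x y | x y. even (x + y)}"
      unfolding primal_vertices_def SQ_def using sq_u_even sq_v_even by fastforce
    moreover have "dual_vertices (SQ \<delta>) \<subseteq> {pt \<delta> x y | x y. odd (x + y)}"
      unfolding dual_vertices_def SQ_def using sq_w_odd sq_w'_odd by fastforce
    moreover have "{pt \<delta> x y | x y. even (x + y)} \<inter> {pt \<delta> x y | x y. odd (x + y)} = {}"
    proof -
      have "pt \<delta> x y \<noteq> pt \<delta> x' y'" if "even (x+y)" "odd (x'+y')" for x y x' y'
        using that d pt_inj[of \<delta> x y x' y'] by auto
      thus ?thesis by blast
    qed
    ultimately show ?thesis by blast
  qed
  show ?thesis unfolding isoradial_def using d 1 2 3 4 5 6 by blast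
qed

lemma angles_SQ: "\<delta> > 0 \<Longrightarrow> angles_bounded (pi/4) (SQ \<delta>)"
  by (auto simp: angles_bounded_def SQ_def half_angle_sq)

lemma even_in_primal: "even (x + y) \<Longrightarrow> pt \<delta> x y \<in> primal_vertices (SQ \<delta>)"
proof -
  assume "even (x+y)"
  hence "tile_u (sq \<delta> x y) = pt \<delta> x y" by (simp add: sq_def)
  thus ?thesis unfolding primal_vertices_def SQ_def by (metis (no_types, lifting) UNIV_I UnI1 case_prod_conv image_eqI)
qed

lemma odd_in_dual: "odd (x + y) \<Longrightarrow> pt \<delta> x y \<in> dual_vertices (SQ \<delta>)"
proof -
  assume "odd (x+y)"
  hence "tile_w (sq \<delta> x y) = pt \<delta> x y" by (simp add: sq_def)
  thus ?thesis unfolding dual_vertices_def SQ_def by (metis (no_types, lifting) UNIV_I UnI1 case_prod_conv image_eqI)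
qed


lemma dist_crit:
  fixes \<delta> :: real
  assumes d: "\<delta> > 0" and Q: "(of_int x - Re p / \<delta>)\<^sup>2 + (of_int y - Im p / \<delta>)\<^sup>2 \<le> 1"
  shows "cmod (pt \<delta> x y - p) \<le> \<delta>"
proof -
  have e1: "\<delta> * of_int x - Re p = \<delta> * (of_int x - Re p / \<delta>)" using d by (simp add: field_simps)
  have e2: "\<delta> * of_int y - Im p = \<delta> * (of_int y - Im p / \<delta>)" using d by (simp add: field_simps)
  have "cmod (pt \<delta> x y - p) = sqrt ((\<delta> * of_int x - Re p)\<^sup>2 + (\<delta> * of_int y - Im p)\<^sup>2)"
    by (simp add: pt_def norm_complex_def)
  also have "\<dots> = sqrt (\<delta>\<^sup>2 * ((of_int x - Re p / \<delta>)\<^sup>2 + (of_int y - Im p / \<delta>)\<^sup>2))"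
    unfolding e1 e2 by (simp add: power_mult_distrib distrib_left)
  also have "\<dots> = \<delta> * sqrt ((of_int x - Re p / \<delta>)\<^sup>2 + (of_int y - Im p / \<delta>)\<^sup>2)"
    using d by (simp add: real_sqrt_mult)
  also have "\<dots> \<le> \<delta> * 1" using d Q by (intro mult_left_mono) auto
  finally show ?thesis by simp
qed

lemma sq_ineq1: "0 \<le> s \<Longrightarrow> 0 \<le> t \<Longrightarrow> s + t \<le> 1 \<Longrightarrow> s\<^sup>2 + t\<^sup>2 \<le> (1::real)"
proof -
  assume a: "0 \<le> s" "0 \<le> t" "s + t \<le> 1"
  have "s\<^sup>2 + t\<^sup>2 \<le> (s+t)\<^sup>2" using a by (simp add: power2_eq_square algebra_simps)
  also have "\<dots> \<le> 1" using a by (simp add: power_le_one)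
  finally show ?thesis .
qed

lemma sq_ineq2: "0 \<le> t \<Longrightarrow> t \<le> s \<Longrightarrow> s \<le> 1 \<Longrightarrow> (1 - s)\<^sup>2 + t\<^sup>2 \<le> (1::real)"
proof -
  assume a: "0 \<le> t" "t \<le> s" "s \<le> 1"
  have "t\<^sup>2 \<le> s\<^sup>2" using a by (simp add: power_mono)
  moreover have "(1 - s)\<^sup>2 + s\<^sup>2 \<le> 1"
  proof -
    have "s * s \<le> s * 1" using a by (intro mult_left_mono) auto
    thus ?thesis by (simp add: power2_eq_square algebra_simps)
  qed
  ultimately show ?thesis by linarith
qed

lemma near_even:
  fixes \<delta> :: real assumes d: "\<delta> > 0"
  shows "\<exists>x y. even (x + y) \<and> cmod (pt \<delta> x y - p) \<le> \<delta>"
proof -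
  define X where "X = Re p / \<delta>"
  define Y where "Y = Im p / \<delta>"
  define x0 where "x0 = \<lfloor>X\<rfloor>"
  define y0 where "y0 = \<lfloor>Y\<rfloor>"
  define s where "s = X - of_int x0"
  define t where "t = Y - of_int y0"
  have st: "0 \<le> s" "s < 1" "0 \<le> t" "t < 1" unfolding s_def t_def x0_def y0_def by linarith+
  have crit: "cmod (pt \<delta> x y - p) \<le> \<delta>" if "(of_int x - X)\<^sup>2 + (of_int y - Y)\<^sup>2 \<le> 1" for x y
    using dist_crit[OF d, of x p y] that unfolding X_def Y_def by simp
  show ?thesis
  proof (cases "even (x0 + y0)")
    case True
    show ?thesis
    proof (cases "s + t \<le> 1")
      case True2: True
      have "(of_int x0 - X)\<^sup>2 + (of_int y0 - Y)\<^sup>2 \<le> 1"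
        using sq_ineq1[of s t] st True2 unfolding s_def t_def by (simp add: power2_commute)
      thus ?thesis using True crit by blast
    next
      case False2: False
      have "(1 - s)\<^sup>2 + (1 - t)\<^sup>2 \<le> 1" using sq_ineq1[of "1-s" "1-t"] st False2 by simp
      hence "(of_int (x0+1) - X)\<^sup>2 + (of_int (y0+1) - Y)\<^sup>2 \<le> 1"
        unfolding s_def t_def by (simp add: power2_commute algebra_simps)
      moreover have "even ((x0+1) + (y0+1))" using True by simp
      ultimately show ?thesis using crit by blast
    qed
  next
    case False
    show ?thesis
    proof (cases "t \<le> s")
      case True2: True
      have "(1 - s)\<^sup>2 + t\<^sup>2 \<le> 1" using sq_ineq2[of t s] st True2 by simp
      hence "(of_int (x0+1) - X)\<^sup>2 + (of_int y0 - Y)\<^sup>2 \<le> 1"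
        unfolding s_def t_def by (simp add: power2_commute algebra_simps)
      moreover have "even ((x0+1) + y0)" using False by simp
      ultimately show ?thesis using crit by blast
    next
      case False2: False
      have "(1 - t)\<^sup>2 + s\<^sup>2 \<le> 1" using sq_ineq2[of s t] st False2 by simp
      hence "(of_int x0 - X)\<^sup>2 + (of_int (y0+1) - Y)\<^sup>2 \<le> 1"
        unfolding s_def t_def by (simp add: power2_commute algebra_simps)
      moreover have "even (x0 + (y0+1))" using False by simp
      ultimately show ?thesis using crit by blast
    qed
  qed
qed

lemma near_odd:
  fixes \<delta> :: real assumes d: "\<delta> > 0"
  shows "\<exists>x y. odd (x + y) \<and> cmod (pt \<delta> x y - p) \<le> \<delta>"
proof -
  obtain x y where xy: "even (x + y)" "cmod (pt \<delta> x y - (p - of_real \<delta>)) \<le> \<delta>"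
    using near_even[OF d, of "p - of_real \<delta>"] by blast
  have eq: "pt \<delta> (x+1) y - p = pt \<delta> x y - (p - of_real \<delta>)"
    by (simp add: pt_def complex_eq_iff algebra_simps)
  have "cmod (pt \<delta> (x+1) y - p) \<le> \<delta>" unfolding eq by (rule xy(2))
  moreover have "odd ((x+1) + y)" using xy(1) by simp
  ultimately show ?thesis by blast
qed

lemma near_primal: "\<delta> > 0 \<Longrightarrow> \<exists>z. z \<in> primal_vertices (SQ \<delta>) \<and> cmod (z - p) \<le> \<delta>"
  using near_even[of \<delta> p] even_in_primal by blast

lemma near_dual: "\<delta> > 0 \<Longrightarrow> \<exists>z. z \<in> dual_vertices (SQ \<delta>) \<and> cmod (z - p) \<le> \<delta>"
  using near_odd[of \<delta> p] odd_in_dual by blast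


lemma dist_rot: "cmod c = 1 \<Longrightarrow> cmod (c * x - c * y) = cmod (x - y)"
  by (simp add: right_diff_distrib[symmetric] norm_mult)

lemma plus_family:
  assumes "length a = n"
  defines "f \<equiv> \<lambda>\<delta>. map (\<lambda>p. SOME z. z \<in> dual_vertices (SQ \<delta>) \<and> cmod (z - p) \<le> \<delta>) a"
  shows "\<forall>\<delta>>0. length (f \<delta>) = n \<and>
             (\<forall>j<n. f \<delta> ! j \<in> dual_vertices (SQ \<delta>) \<and> cmod (f \<delta> ! j - a ! j) \<le> \<delta>)"
proof (intro allI impI conjI)
  fix \<delta> :: real assume d: "\<delta> > 0"
  show "length (f \<delta>) = n" using assms by simp
  fix j assume j: "j < n"
  have "f \<delta> ! j \<in> dual_vertices (SQ \<delta>) \<and> cmod (f \<delta> ! j - a ! j) \<le> \<delta>"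
    using j assms(1) near_dual[OF d, of "a ! j"] unfolding f_def by (simp del: tile_verts.simps) (rule someI_ex)
  thus "f \<delta> ! j \<in> dual_vertices (SQ \<delta>)" "cmod (f \<delta> ! j - a ! j) \<le> \<delta>" by auto
qed

lemma free_family:
  assumes "length a = n"
  defines "f \<equiv> \<lambda>\<delta>. map (\<lambda>p. SOME z. z \<in> primal_vertices (SQ \<delta>) \<and> cmod (z - p) \<le> \<delta>) a"
  shows "\<forall>\<delta>>0. length (f \<delta>) = n \<and>
             (\<forall>j<n. f \<delta> ! j \<in> primal_vertices (SQ \<delta>) \<and> cmod (f \<delta> ! j - a ! j) \<le> \<delta>)"
proof (intro allI impI conjI)
  fix \<delta> :: real assume d: "\<delta> > 0"
  show "length (f \<delta>) = n" using assms by simp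
  fix j assume j: "j < n"
  have "f \<delta> ! j \<in> primal_vertices (SQ \<delta>) \<and> cmod (f \<delta> ! j - a ! j) \<le> \<delta>"
    using j assms(1) near_primal[OF d, of "a ! j"] unfolding f_def by (simp del: tile_verts.simps) (rule someI_ex)
  thus "f \<delta> ! j \<in> primal_vertices (SQ \<delta>)" "cmod (f \<delta> ! j - a ! j) \<le> \<delta>" by auto
qed

lemma dual_rot: "dual_vertices (rotT c ` T) = (\<lambda>z. c * z) ` dual_vertices T"
  by (auto simp: dual_vertices_def image_image image_Un)
lemma primal_rot: "primal_vertices (rotT c ` T) = (\<lambda>z. c * z) ` primal_vertices T"
  by (auto simp: primal_vertices_def image_image image_Un)

lemma angles_rot: "cmod c = 1 \<Longrightarrow> angles_bounded \<eta> T \<Longrightarrow> angles_bounded \<eta> (rotT c ` T)"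
  by (auto simp: angles_bounded_def half_angle_rotT)

lemma rot_family:
  assumes c: "cmod c = 1"
    and L: "\<forall>\<delta>>0. isoradial \<delta> (L \<delta>) \<and> angles_bounded \<eta> (L \<delta>)"
  shows "\<forall>\<delta>>0. isoradial \<delta> (rotT c ` L \<delta>) \<and> angles_bounded \<eta> (rotT c ` L \<delta>)"
  using L isoradial_rotT[OF c] angles_rot[OF c] by blast

lemma rot_f:
  assumes c: "cmod c = 1" and V: "\<And>T. V (rotT c ` T) = (\<lambda>z. c * z) ` V T"
    and f: "\<forall>\<delta>>0. length (f \<delta>) = n \<and> (\<forall>j<n. f \<delta> ! j \<in> V (L \<delta>) \<and> cmod (f \<delta> ! j - a ! j) \<le> \<delta>)"
    and la: "length a = n"
  shows "\<forall>\<delta>>0. length (map (\<lambda>z. c * z) (f \<delta>)) = n \<and>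
     (\<forall>j<n. map (\<lambda>z. c * z) (f \<delta>) ! j \<in> V (rotT c ` L \<delta>) \<and>
            cmod (map (\<lambda>z. c * z) (f \<delta>) ! j - map (\<lambda>z. c * z) a ! j) \<le> \<delta>)"
  using f la by (auto simp: V dist_rot[OF c])


theorem corollary1p2:
  fixes m :: real and n :: nat and F G :: "complex list \<Rightarrow> real"
    and \<phi> :: real and a :: "complex list"
  assumes "2 \<le> n" and "m < 0"
    and "plus_scaling_fn m n F" and "free_scaling_fn m n G"
    and "length a = n" and "distinct a"
  shows "ising_C ^ n * F (map (\<lambda>z. cis \<phi> * z) a) = ising_C ^ n * F a \<and>
         ising_C ^ n * G (map (\<lambda>z. cis \<phi> * z) a) = ising_C ^ n * G a"
proof -
  define c where "c = cis \<phi>"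
  have c: "cmod c = 1" unfolding c_def by simp
  have c0: "c \<noteq> 0" using c by auto
  define a' where "a' = map (\<lambda>z. c * z) a"
  have la': "length a' = n" using assms(5) by (simp add: a'_def)
  have da': "distinct a'" unfolding a'_def using assms(6) inj_cmult[OF c0]
    by (simp add: distinct_map inj_on_def)
  have eta: "(0::real) < pi / 4" by simp
  have L: "\<forall>\<delta>>0. isoradial \<delta> (SQ \<delta>) \<and> angles_bounded (pi/4) (SQ \<delta>)"
    using isoradial_SQ angles_SQ by blast
  have L': "\<forall>\<delta>>0. isoradial \<delta> (rotT c ` SQ \<delta>) \<and> angles_bounded (pi/4) (rotT c ` SQ \<delta>)"
    using rot_family[OF c L] .
  define fd where "fd = (\<lambda>\<delta>. map (\<lambda>p. SOME z. z \<in> dual_vertices (SQ \<delta>) \<and> cmod (z - p) \<le> \<delta>) a)"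
  define fp where "fp = (\<lambda>\<delta>. map (\<lambda>p. SOME z. z \<in> primal_vertices (SQ \<delta>) \<and> cmod (z - p) \<le> \<delta>) a)"
  have fd: "\<forall>\<delta>>0. length (fd \<delta>) = n \<and>
             (\<forall>j<n. fd \<delta> ! j \<in> dual_vertices (SQ \<delta>) \<and> cmod (fd \<delta> ! j - a ! j) \<le> \<delta>)"
    unfolding fd_def by (rule plus_family[OF assms(5)])
  have fp: "\<forall>\<delta>>0. length (fp \<delta>) = n \<and>
             (\<forall>j<n. fp \<delta> ! j \<in> primal_vertices (SQ \<delta>) \<and> cmod (fp \<delta> ! j - a ! j) \<le> \<delta>)"
    unfolding fp_def by (rule free_family[OF assms(5)])
  have fd': "\<forall>\<delta>>0. length (map (\<lambda>z. c * z) (fd \<delta>)) = n \<and>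
     (\<forall>j<n. map (\<lambda>z. c * z) (fd \<delta>) ! j \<in> dual_vertices (rotT c ` SQ \<delta>) \<and>
            cmod (map (\<lambda>z. c * z) (fd \<delta>) ! j - a' ! j) \<le> \<delta>)"
    unfolding a'_def by (rule rot_f[OF c dual_rot fd assms(5)])
  have fp': "\<forall>\<delta>>0. length (map (\<lambda>z. c * z) (fp \<delta>)) = n \<and>
     (\<forall>j<n. map (\<lambda>z. c * z) (fp \<delta>) ! j \<in> primal_vertices (rotT c ` SQ \<delta>) \<and>
            cmod (map (\<lambda>z. c * z) (fp \<delta>) ! j - a' ! j) \<le> \<delta>)"
    unfolding a'_def by (rule rot_f[OF c primal_rot fp assms(5)])
  have P1: "((\<lambda>\<delta>. \<delta> powr (- (real n / 8)) * E_plus (m * \<delta> / 2) (SQ \<delta>) (fd \<delta>))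
             \<longlongrightarrow> ising_C ^ n * F a) (at_right 0)"
    by (rule assms(3)[unfolded plus_scaling_fn_def, rule_format, OF conjI[OF assms(5,6)] conjI[OF eta conjI[OF L fd]]])
  have P2: "((\<lambda>\<delta>. \<delta> powr (- (real n / 8)) * E_plus (m * \<delta> / 2) (rotT c ` SQ \<delta>) (map (\<lambda>z. c * z) (fd \<delta>)))
             \<longlongrightarrow> ising_C ^ n * F a') (at_right 0)"
    by (rule assms(3)[unfolded plus_scaling_fn_def, rule_format, OF conjI[OF la' da'] conjI[OF eta conjI[OF L' fd']]])
  have P2': "((\<lambda>\<delta>. \<delta> powr (- (real n / 8)) * E_plus (m * \<delta> / 2) (SQ \<delta>) (fd \<delta>))
             \<longlongrightarrow> ising_C ^ n * F a') (at_right 0)"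
    using P2 by (simp add: E_plus_rot[OF c])
  have G1: "((\<lambda>\<delta>. \<delta> powr (- (real n / 8)) * E_free (- m * \<delta> / 2) (SQ \<delta>) (fp \<delta>))
             \<longlongrightarrow> ising_C ^ n * G a) (at_right 0)"
    by (rule assms(4)[unfolded free_scaling_fn_def, rule_format, OF conjI[OF assms(5,6)] conjI[OF eta conjI[OF L fp]]])
  have G2: "((\<lambda>\<delta>. \<delta> powr (- (real n / 8)) * E_free (- m * \<delta> / 2) (rotT c ` SQ \<delta>) (map (\<lambda>z. c * z) (fp \<delta>)))
             \<longlongrightarrow> ising_C ^ n * G a') (at_right 0)"
    by (rule assms(4)[unfolded free_scaling_fn_def, rule_format, OF conjI[OF la' da'] conjI[OF eta conjI[OF L' fp']]])
  have G2': "((\<lambda>\<delta>. \<delta> powr (- (real n / 8)) * E_free (- m * \<delta> / 2) (SQ \<delta>) (fp \<delta>))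
             \<longlongrightarrow> ising_C ^ n * G a') (at_right 0)"
    using G2 by (simp add: E_free_rot[OF c])
  have "ising_C ^ n * F a' = ising_C ^ n * F a"
    using tendsto_unique[OF trivial_limit_at_right_real P2' P1] .
  moreover have "ising_C ^ n * G a' = ising_C ^ n * G a"
    using tendsto_unique[OF trivial_limit_at_right_real G2' G1] .
  ultimately show ?thesis unfolding a'_def c_def by simp
qed

end
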